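(* Let $X_1,\dots,X_n$ be i.i.d. from a Gaussian location mixture $\nu*N(0,\sigma^2)$ whose distribution has a density, and assume $n>k$. For $j\ge1$ let $\hat\gamma_j=\frac1n\sum_{i=1}^nX_i^j$, $\hat\gamma_0=1$, and for $r\ge0$ and $\sigma'\ge 0$ let $\hat m_r(\sigma')=r!\sum_{i=0}^{\lfloor r/2\rfloor}\frac{(-1/2)^i}{i!(r-2i)!}\hat\gamma_{r-2i}\sigma'^{2i}$. Let $\hat d_k(\sigma')=\det\big(\hat m_{i+j}(\sigma')\big)_{i,j=0}^k$. Then, almost surely, $\hat d_k$ has a positive root in $(0,s]$, where $s^2=\frac1n\sum_{i=1}^n(X_i-\hat\gamma_1)^2$ is the sample variance. *)

theory Defs
  imports "HOL-Probability.Probability"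
begin

definition gauss :: "real \<Rightarrow> real measure" where
  "gauss \<sigma> = (if \<sigma> = 0 then return borel 0 else density lborel (\<lambda>x. ennreal (normal_density 0 \<sigma> x)))"

definition gauss_mixture :: "real measure \<Rightarrow> real \<Rightarrow> real measure" where
  "gauss_mixture \<nu> \<sigma> = convolution \<nu> (gauss \<sigma>)"

definition det_sq :: "nat \<Rightarrow> (nat \<Rightarrow> nat \<Rightarrow> real) \<Rightarrow> real" where
  "det_sq N A = (\<Sum>p | p permutes {..N}. of_int (sign p) * (\<Prod>i\<le>N. A i (p i)))"

definition emp_moment :: "nat \<Rightarrow> (nat \<Rightarrow> real) \<Rightarrow> nat \<Rightarrow> real" where
  "emp_moment n x j = (if j = 0 then 1 else (1 / real n) * (\<Sum>i<n. x i ^ j))"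

definition m_hat :: "nat \<Rightarrow> (nat \<Rightarrow> real) \<Rightarrow> nat \<Rightarrow> real \<Rightarrow> real" where
  "m_hat n x r s' = fact r * (\<Sum>i = 0..r div 2.
      (-1/2) ^ i / (fact i * fact (r - 2*i)) * emp_moment n x (r - 2*i) * s' ^ (2*i))"

definition d_hat :: "nat \<Rightarrow> (nat \<Rightarrow> real) \<Rightarrow> nat \<Rightarrow> real \<Rightarrow> real" where
  "d_hat n x k s' = det_sq k (\<lambda>i j. m_hat n x (i + j) s')"

definition sample_sd :: "nat \<Rightarrow> (nat \<Rightarrow> real) \<Rightarrow> real" where
  "sample_sd n x = sqrt ((1 / real n) * (\<Sum>i<n. (x i - emp_moment n x 1)\<^sup>2))"

end

theory Submission
  imports Defs "Jordan_Normal_Form.Determinant" "HOL-Computational_Algebra.Polynomial"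
begin


lemma det_sq_jnf: "det_sq k A = det (mat (Suc k) (Suc k) (\<lambda>(i,j). A i j))"
proof -
  have U: "{0..<Suc k} = {..k}" by auto
  show ?thesis unfolding det_sq_def det_def
    by (simp add: U)
qed

lemma det_sq_kernel:
  assumes "\<And>i. i \<le> k \<Longrightarrow> (\<Sum>j\<le>k. A i j * v j) = 0" and "j0 \<le> k" "v j0 \<noteq> 0"
  shows "det_sq k A = 0"
proof -
  let ?M = "mat (Suc k) (Suc k) (\<lambda>(i,j). A i j)"
  let ?v = "vec (Suc k) v"
  have M: "?M \<in> carrier_mat (Suc k) (Suc k)" by simp
  have "?v \<noteq> 0\<^sub>v (Suc k)"
  proof
    assume "?v = 0\<^sub>v (Suc k)"
    then have "?v $ j0 = 0\<^sub>v (Suc k) $ j0" by simp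
    then show False using assms(2,3) by simp
  qed
  moreover have "?M *\<^sub>v ?v = 0\<^sub>v (Suc k)"
  proof (rule eq_vecI)
    fix i assume i: "i < dim_vec (0\<^sub>v (Suc k))"
    then have "(?M *\<^sub>v ?v) $ i = (\<Sum>j<Suc k. A i j * v j)"
      by (simp add: mult_mat_vec_def scalar_prod_def atLeast0LessThan)
    also have "\<dots> = 0" using assms(1)[of i] i lessThan_Suc_atMost by simp
    finally show "(?M *\<^sub>v ?v) $ i = 0\<^sub>v (Suc k) $ i" using i by simp
  qed simp
  ultimately show ?thesis unfolding det_sq_jnf using det_0_iff_vec_prod_zero[OF M]
    by (meson vec_carrier)
qed



definition qf :: "nat \<Rightarrow> (nat \<Rightarrow> nat \<Rightarrow> real) \<Rightarrow> (nat \<Rightarrow> real) \<Rightarrow> real" where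
  "qf k A v = (\<Sum>i\<le>k. \<Sum>j\<le>k. v i * A i j * v j)"

lemma qf_expand:
  assumes sym: "\<And>i j. A i j = A j i" and i: "i \<le> k"
  shows "qf k A (\<lambda>l. v l + (if l = i then x else 0)) =
    qf k A v + 2 * x * (\<Sum>j\<le>k. A i j * v j) + x^2 * A i i"
proof -
  have e: "(v l + (if l = i then x else 0)) * A l m * (v m + (if m = i then x else 0)) =
      v l * A l m * v m + (if l = i then x * A i m * v m else 0)
      + (if m = i then x * A i l * v l else 0) + (if l = i \<and> m = i then x^2 * A i i else 0)"
    for l m using sym[of l m] by (auto simp: algebra_simps power2_eq_square)
  have "qf k A (\<lambda>l. v l + (if l = i then x else 0)) =
     (\<Sum>l\<le>k. \<Sum>m\<le>k. v l * A l m * v m) + (\<Sum>l\<le>k. \<Sum>m\<le>k. (if l = i then x * A i m * v m else 0))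
     + (\<Sum>l\<le>k. \<Sum>m\<le>k. (if m = i then x * A i l * v l else 0))
     + (\<Sum>l\<le>k. \<Sum>m\<le>k. (if l = i \<and> m = i then x^2 * A i i else 0))"
    unfolding qf_def e by (simp add: sum.distrib)
  also have "\<dots> = qf k A v + x * (\<Sum>j\<le>k. A i j * v j) + x * (\<Sum>j\<le>k. A i j * v j) + x^2 * A i i"
  proof -
    have 1: "(\<Sum>l\<le>k. \<Sum>m\<le>k. (if l = i then x * A i m * v m else 0)) = x * (\<Sum>j\<le>k. A i j * v j)"
    proof -
      have "(\<Sum>l\<le>k. \<Sum>m\<le>k. (if l = i then x * A i m * v m else 0)) =
            (\<Sum>l\<le>k. (if l = i then (\<Sum>m\<le>k. x * A i m * v m) else 0))"
        by (rule sum.cong) auto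
      also have "\<dots> = (\<Sum>m\<le>k. x * A i m * v m)" using i by simp
      finally show ?thesis by (simp add: sum_distrib_left mult.assoc)
    qed
    have 2: "(\<Sum>l\<le>k. \<Sum>m\<le>k. (if m = i then x * A i l * v l else 0)) = x * (\<Sum>j\<le>k. A i j * v j)"
      using i by (simp add: sum_distrib_left mult.assoc)
    have 3: "(\<Sum>l\<le>k. \<Sum>m\<le>k. (if l = i \<and> m = i then x^2 * A i i else 0)) = x^2 * A i i"
    proof -
      have "(\<Sum>l\<le>k. \<Sum>m\<le>k. (if l = i \<and> m = i then x^2 * A i i else 0)) =
            (\<Sum>l\<le>k. (if l = i then (\<Sum>m\<le>k. if m = i then x^2 * A i i else 0) else 0))"
        by (rule sum.cong) auto
      also have "\<dots> = x^2 * A i i" using i by simp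
      finally show ?thesis .
    qed
    show ?thesis unfolding 1 2 3 qf_def by simp
  qed
  finally show ?thesis by simp
qed

lemma psd_kernel:
  assumes sym: "\<And>i j. A i j = A j i" and psd: "\<And>w. qf k A w \<ge> 0"
    and z: "qf k A v = 0" and i: "i \<le> k"
  shows "(\<Sum>j\<le>k. A i j * v j) = 0"
proof -
  define c where "c = (\<Sum>j\<le>k. A i j * v j)"
  define a where "a = A i i"
  have "qf k A (\<lambda>l. 0 + (if l = i then 1 else 0)) = a"
    using qf_expand[OF sym i, where v="\<lambda>_. 0" and x=1] by (simp add: a_def qf_def)
  then have a: "a \<ge> 0" using psd by metis
  define x where "x = - c / (a + 1)"
  have "0 \<le> qf k A (\<lambda>l. v l + (if l = i then x else 0))" by (rule psd)
  then have "0 \<le> 2 * x * c + x^2 * a" using qf_expand[OF sym i, where v=v and x=x] z by (simp add: c_def a_def)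
  then have "0 \<le> (2 * x * c + x^2 * a) * (a+1)^2" using a by simp
  also have "\<dots> = 2*c*(x*(a+1))*(a+1) + a*(x*(a+1))^2" by (simp add: algebra_simps power2_eq_square)
  also have "x*(a+1) = -c" using a by (simp add: x_def)
  also have "2*c*(-c)*(a+1) + a*(-c)^2 = - (c^2 * (a + 2))" by (simp add: algebra_simps power2_eq_square)
  finally have "c^2 * (a+2) \<le> 0" by simp
  then have "c^2 \<le> 0" using a by (smt (verit) mult_nonneg_nonneg zero_le_power2 mult_pos_pos)
  then show ?thesis unfolding c_def[symmetric] by simp
qed



lemma m_hat_0: "m_hat n x r 0 = emp_moment n x r"
proof -
  have "m_hat n x r 0 = fact r * ((-1/2) ^ 0 / (fact 0 * fact (r - 2*0)) * emp_moment n x (r - 2*0) * 0 ^ (2*0)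
      + (\<Sum>i = Suc 0..r div 2. (-1/2) ^ i / (fact i * fact (r - 2*i)) * emp_moment n x (r - 2*i) * 0 ^ (2*i)))"
    unfolding m_hat_def by (subst sum.atLeast_Suc_atMost) auto
  also have "(\<Sum>i = Suc 0..r div 2. (-1/2) ^ i / (fact i * fact (r - 2*i)) * emp_moment n x (r - 2*i) * (0::real) ^ (2*i)) = 0"
    by (rule sum.neutral) auto
  finally show ?thesis by simp
qed

lemma emp_moment_sum: "n > 0 \<Longrightarrow> emp_moment n x j = (1 / real n) * (\<Sum>l<n. x l ^ j)"
  by (simp add: emp_moment_def)

lemma qf_0: assumes "n > 0"
  shows "qf k (\<lambda>i j. m_hat n x (i+j) 0) v = (1 / real n) * (\<Sum>l<n. (\<Sum>i\<le>k. v i * x l ^ i)^2)"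
proof -
  have "qf k (\<lambda>i j. m_hat n x (i+j) 0) v = (\<Sum>i\<le>k. \<Sum>j\<le>k. \<Sum>l<n. (1 / real n) * ((v i * x l ^ i) * (v j * x l ^ j)))"
    unfolding qf_def m_hat_0 emp_moment_sum[OF assms]
    by (intro sum.cong refl) (simp add: sum_distrib_left sum_distrib_right power_add algebra_simps)
  also have "\<dots> = (\<Sum>l<n. (1 / real n) * ((\<Sum>i\<le>k. v i * x l ^ i) * (\<Sum>j\<le>k. v j * x l ^ j)))"
    apply (subst sum.swap)
    apply (subst (2) sum.swap)
    apply (intro sum.cong refl)
    apply (subst sum_product)
    apply (subst sum_distrib_left)
    apply (intro sum.cong refl)
    apply (subst sum_distrib_left)
    by simp
  also have "\<dots> = (1 / real n) * (\<Sum>l<n. (\<Sum>i\<le>k. v i * x l ^ i)^2)"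
    by (simp add: sum_distrib_left power2_eq_square)
  finally show ?thesis .
qed

lemma qf_0_pos:
  assumes inj: "inj_on x {..<n}" and nk: "n > k" and j0: "j0 \<le> k" "v j0 \<noteq> 0"
  shows "qf k (\<lambda>i j. m_hat n x (i+j) 0) v > 0"
proof (rule ccontr)
  assume "\<not> ?thesis"
  then have le: "(1 / real n) * (\<Sum>l<n. (\<Sum>i\<le>k. v i * x l ^ i)^2) \<le> 0" using qf_0[of n] nk by simp
  have "(\<Sum>l<n. (\<Sum>i\<le>k. v i * x l ^ i)^2) \<ge> 0" by (intro sum_nonneg) auto
  with le nk have "(\<Sum>l<n. (\<Sum>i\<le>k. v i * x l ^ i)^2) = 0"
    by (smt (verit) divide_pos_pos mult_pos_pos of_nat_0_less_iff zero_less_one gr_zeroI not_less0)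
  then have roots: "\<And>l. l < n \<Longrightarrow> (\<Sum>i\<le>k. v i * x l ^ i) = 0"
    by (subst (asm) sum_nonneg_eq_0_iff) auto
  define p where "p = (\<Sum>i\<le>k. monom (v i) i)"
  have pe: "poly p y = (\<Sum>i\<le>k. v i * y ^ i)" for y by (simp add: p_def poly_sum poly_monom)
  have "coeff p j0 = v j0" using j0 by (simp add: p_def coeff_sum coeff_monom)
  then have p0: "p \<noteq> 0" using j0 by auto
  have deg: "degree p \<le> k" unfolding p_def by (intro degree_sum_le) (auto intro: order.trans[OF degree_monom_le])
  have sub: "x ` {..<n} \<subseteq> {y. poly p y = 0}" using roots pe by auto
  have "n = card (x ` {..<n})" using inj by (simp add: card_image)
  also have "\<dots> \<le> card {y. poly p y = 0}" by (rule card_mono[OF poly_roots_finite[OF p0] sub])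
  also have "\<dots> \<le> degree p" by (rule card_poly_roots_bound[OF p0])
  finally show False using deg nk by simp
qed



lemma m_hat_1: "m_hat n x 1 s = emp_moment n x 1"
  by (simp add: m_hat_def)

lemma m_hat_2: "m_hat n x 2 s = emp_moment n x 2 - s^2"
proof -
  have "{0..(2::nat) div 2} = {0,1}" by auto
  then show ?thesis by (simp add: m_hat_def emp_moment_def)
qed

lemma qf_cong: "(\<And>i. i \<le> k \<Longrightarrow> v i = w i) \<Longrightarrow> qf k A v = qf k A w"
  unfolding qf_def by (intro sum.cong refl) auto

lemma qf_scale: "qf k A (\<lambda>i. c * v i) = c^2 * qf k A v"
  unfolding qf_def by (simp add: sum_distrib_left power2_eq_square algebra_simps)

lemma qf01:
  assumes "k \<ge> 1" "\<And>l. l \<noteq> 0 \<Longrightarrow> l \<noteq> 1 \<Longrightarrow> v l = 0"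
  shows "qf k A v = v 0 * A 0 0 * v 0 + v 0 * A 0 1 * v 1 + v 1 * A 1 0 * v 0 + v 1 * A 1 1 * v 1"
proof -
  have sub: "{0,1} \<subseteq> {..k}" using assms(1) by auto
  have in1: "(\<Sum>j\<le>k. v i * A i j * v j) = (\<Sum>j\<in>{0,1}. v i * A i j * v j)" for i
  proof (rule sum.mono_neutral_right)
    show "\<forall>j\<in>{..k} - {0, 1}. v i * A i j * v j = 0" using assms(2) by auto
  qed (use sub in auto)
  have "qf k A v = (\<Sum>i\<in>{0,1}. \<Sum>j\<le>k. v i * A i j * v j)"
    unfolding qf_def
  proof (rule sum.mono_neutral_right)
    show "\<forall>i\<in>{..k} - {0, 1}. (\<Sum>j\<le>k. v i * A i j * v j) = 0" using assms(2) by auto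
  qed (use sub in auto)
  then show ?thesis unfolding in1 by simp
qed

lemma sample_sd_sq:
  assumes "n > 0"
  shows "(sample_sd n x)^2 = emp_moment n x 2 - (emp_moment n x 1)^2"
proof -
  let ?g = "emp_moment n x 1"
  have nn: "0 \<le> (1 / real n) * (\<Sum>i<n. (x i - ?g)\<^sup>2)" by (intro mult_nonneg_nonneg sum_nonneg) auto
  have "(sample_sd n x)^2 = (1 / real n) * (\<Sum>i<n. (x i - ?g)\<^sup>2)"
    unfolding sample_sd_def using nn by simp
  also have "\<dots> = (1 / real n) * (\<Sum>i<n. x i ^ 2) - 2 * ?g * ((1 / real n) * (\<Sum>i<n. x i)) + ?g^2"
  proof -
    have "(\<Sum>i<n. (x i - ?g)\<^sup>2) = (\<Sum>i<n. x i^2) - 2*?g*(\<Sum>i<n. x i) + real n * ?g^2"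
    proof -
      have "(\<Sum>i<n. (x i - ?g)\<^sup>2) = (\<Sum>i<n. x i^2 - 2*?g*x i + ?g^2)"
        by (intro sum.cong refl) (simp add: power2_diff algebra_simps)
      also have "\<dots> = (\<Sum>i<n. x i^2) - (\<Sum>i<n. 2*?g*x i) + (\<Sum>i<n. ?g^2)"
        by (simp add: sum.distrib sum_subtractf)
      also have "(\<Sum>i<n. 2*?g*x i) = 2*?g*(\<Sum>i<n. x i)" by (simp add: sum_distrib_left)
      finally show ?thesis by simp
    qed
    moreover have "real n > 0" using assms by simp
    ultimately show ?thesis by (simp add: field_simps power2_eq_square)
  qed
  also have "\<dots> = emp_moment n x 2 - ?g^2" using assms
    by (simp add: emp_moment_def power2_eq_square)
  finally show ?thesis .
qed

lemma qf_at_sd: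
  fixes x :: "nat \<Rightarrow> real"
  assumes "n > 0" "k \<ge> 1"
  defines "g \<equiv> emp_moment n x 1"
  shows "qf k (\<lambda>i j. m_hat n x (i+j) (sample_sd n x)) (\<lambda>i. if i = 0 then - g else if i = 1 then 1 else 0) = 0"
proof -
  let ?s = "sample_sd n x"
  have m0: "m_hat n x 0 ?s = 1" by (simp add: m_hat_def emp_moment_def)
  have m1: "m_hat n x 1 ?s = g" using m_hat_1 g_def by simp
  have m2: "m_hat n x 2 ?s = emp_moment n x 2 - ?s^2" by (rule m_hat_2)
  have sd: "?s^2 = emp_moment n x 2 - g^2" using sample_sd_sq[OF assms(1), of x] g_def by simp
  have "qf k (\<lambda>i j. m_hat n x (i+j) ?s) (\<lambda>i. if i = 0 then - g else if i = 1 then 1 else 0)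
     = (-g) * m_hat n x 0 ?s * (-g) + (-g) * m_hat n x 1 ?s * 1 + 1 * m_hat n x 1 ?s * (-g) + 1 * m_hat n x 2 ?s * 1"
    by (subst qf01[OF assms(2)]) (auto simp: numeral_2_eq_2)
  also have "\<dots> = g*g - g*g - g*g + (emp_moment n x 2 - ?s^2)" unfolding m0 m1 m2 by simp
  also have "\<dots> = 0" unfolding sd by (simp add: power2_eq_square)
  finally show ?thesis .
qed



lemma cont_snd_coord [continuous_intros]:
  "continuous_on UNIV (\<lambda>p::real \<times> (nat \<Rightarrow> real). snd p i)"
  by (rule continuous_on_compose2[OF continuous_on_product_coordinates continuous_on_snd]) auto

lemma cont_m_hat [continuous_intros]:
  "continuous_on S f \<Longrightarrow> continuous_on S (\<lambda>p. m_hat n x r (f p))"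
  unfolding m_hat_def by (intro continuous_intros)

lemma compact_K:
  "compact {v::nat \<Rightarrow> real. (\<forall>i. v i \<in> (if i \<le> k then {-1..1} else {0})) \<and> (\<Sum>i\<le>k. (v i)^2) = 1}"
proof -
  let ?B = "\<lambda>i::nat. if i \<le> k then {-1..1::real} else {0}"
  have "compactin (product_topology (\<lambda>i. euclidean) UNIV) (Pi\<^sub>E UNIV ?B)"
    by (subst compactin_PiE) auto
  then have c: "compact (Pi\<^sub>E UNIV ?B)" by (simp add: euclidean_product_topology)
  have cl: "closed {v::nat \<Rightarrow> real. (\<Sum>i\<le>k. (v i)^2) = 1}"
    by (intro closed_Collect_eq continuous_intros continuous_on_compose2[OF _ continuous_on_product_coordinates]) auto
  have "{v::nat \<Rightarrow> real. (\<forall>i. v i \<in> ?B i) \<and> (\<Sum>i\<le>k. (v i)^2) = 1} = Pi\<^sub>E UNIV ?B \<inter> {v. (\<Sum>i\<le>k. (v i)^2) = 1}"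
    unfolding PiE_UNIV_domain Pi_def by blast
  then show ?thesis using compact_Int_closed[OF c cl] by simp
qed

lemma K_nz:
  assumes "(\<Sum>i\<le>k. (v i)^2) = (1::real)"
  shows "\<exists>j\<le>k. v j \<noteq> 0"
proof (rule ccontr)
  assume "\<not> ?thesis"
  then have "(\<Sum>i\<le>k. (v i)^2) = 0" by (intro sum.neutral) auto
  with assms show False by simp
qed

lemma psd_extend:
  fixes Q :: "(nat \<Rightarrow> real) \<Rightarrow> real"
  assumes QK: "\<And>w. (\<forall>i. w i \<in> (if i \<le> k then {-1..1} else {0})) \<Longrightarrow> (\<Sum>i\<le>k. (w i)^2) = 1 \<Longrightarrow> qf k A w \<ge> 0"
  shows "qf k A w \<ge> 0"
proof (cases "\<forall>i\<le>k. w i = 0")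
  case True
  then have "qf k A w = qf k A (\<lambda>_. 0)" by (intro qf_cong) auto
  then show ?thesis by (simp add: qf_def)
next
  case False
  then obtain j where j: "j \<le> k" "w j \<noteq> 0" by auto
  define S where "S = (\<Sum>i\<le>k. (w i)^2)"
  define c where "c = sqrt S"
  have S0: "S > 0" unfolding S_def by (rule sum_pos2[of _ j]) (use j in auto)
  then have c0: "c > 0" by (simp add: c_def)
  have cS: "c^2 = S" using S0 by (simp add: c_def)
  define w' where "w' = (\<lambda>i. if i \<le> k then w i / c else 0)"
  have "\<forall>i. w' i \<in> (if i \<le> k then {-1..1} else {0})"
  proof
    fix i
    show "w' i \<in> (if i \<le> k then {-1..1} else {0})"
    proof (cases "i \<le> k")
      case True
      have "(w i)^2 \<le> S" unfolding S_def by (rule member_le_sum) (use True in auto)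
      then have "sqrt ((w i)^2) \<le> sqrt S" by (rule real_sqrt_le_mono)
      then have wc: "\<bar>w i\<bar> \<le> c" unfolding c_def real_sqrt_abs .
      have "\<bar>w i / c\<bar> = \<bar>w i\<bar> / c" using c0 by (simp add: abs_divide)
      also have "\<dots> \<le> 1" using c0 wc by (simp add: pos_divide_le_eq)
      finally have "\<bar>w' i\<bar> \<le> 1" using True by (simp add: w'_def)
      then have "-1 \<le> w' i \<and> w' i \<le> 1" by (cases "w' i \<ge> 0") auto
      then show ?thesis using True by simp
    qed (simp add: w'_def)
  qed
  moreover have "(\<Sum>i\<le>k. (w' i)^2) = 1"
  proof -
    have "(\<Sum>i\<le>k. (w' i)^2) = (\<Sum>i\<le>k. (w i)^2 / c^2)"
      by (intro sum.cong refl) (simp add: w'_def power_divide)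
    also have "\<dots> = S / c^2" by (simp add: S_def sum_divide_distrib)
    finally show ?thesis using cS S0 by simp
  qed
  ultimately have "qf k A w' \<ge> 0" by (rule QK)
  moreover have "qf k A w = qf k A (\<lambda>i. c * w' i)" by (intro qf_cong) (use c0 in \<open>simp add: w'_def\<close>)
  ultimately show ?thesis by (simp add: qf_scale)
qed

lemma det_root:
  fixes x :: "nat \<Rightarrow> real"
  assumes inj: "inj_on x {..<n}" and k1: "k \<ge> 1" and nk: "n > k"
  shows "\<exists>t. 0 < t \<and> t \<le> sample_sd n x \<and> d_hat n x k t = 0"
proof -
  define s where "s = sample_sd n x"
  define Q where "Q \<sigma> v = qf k (\<lambda>i j. m_hat n x (i+j) \<sigma>) v" for \<sigma> v
  define K where "K = {v::nat \<Rightarrow> real. (\<forall>i. v i \<in> (if i \<le> k then {-1..1} else {0})) \<and> (\<Sum>i\<le>k. (v i)^2) = 1}"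
  define C where "C = ({0..s} \<times> K) \<inter> {p. Q (fst p) (snd p) \<le> 0}"
  define T where "T = fst ` C"
  have n0: "n > 0" using nk by simp
  have Kc: "compact K" using compact_K K_def by simp
  have contQ: "continuous_on UNIV (\<lambda>p. Q (fst p) (snd p))"
    unfolding Q_def qf_def by (intro continuous_intros)
  have Cc: "compact C" unfolding C_def
    by (intro compact_Int_closed compact_Times compact_Icc Kc closed_Collect_le contQ continuous_on_const)
  have Tc: "compact T" unfolding T_def by (rule compact_continuous_image[OF continuous_on_fst[OF continuous_on_id] Cc])
  have Q0: "Q 0 v > 0" if "v \<in> K" for v
  proof -
    have "(\<Sum>i\<le>k. (v i)^2) = 1" using that by (simp add: K_def)
    from K_nz[OF this] obtain j where "j \<le> k" "v j \<noteq> 0" by blast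
    then show ?thesis unfolding Q_def by (rule qf_0_pos[OF inj nk])
  qed
  define g where "g = emp_moment n x 1"
  define c where "c = sqrt (1 + g^2)"
  have c1: "c \<ge> 1" unfolding c_def by simp
  define u where "u = (\<lambda>i::nat. if i = 0 then - g else if i = 1 then 1 else 0)"
  define v0 where "v0 = (\<lambda>i. inverse c * u i)"
  have "v0 \<in> K"
  proof -
    have gc: "\<bar>g\<bar> \<le> c" unfolding c_def by (metis real_sqrt_abs real_sqrt_le_mono le_add_same_cancel2 zero_le_one)
    have "\<forall>i. v0 i \<in> (if i \<le> k then {-1..1} else {0})"
    proof
      fix i
      have "\<bar>u i\<bar> \<le> c" using gc c1 by (simp add: u_def)
      moreover have "\<bar>v0 i\<bar> = \<bar>u i\<bar> / c" using c1 by (simp add: v0_def abs_mult divide_inverse mult.commute)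
      ultimately have "\<bar>v0 i\<bar> \<le> 1" using c1 by simp
      moreover have "i > k \<Longrightarrow> v0 i = 0" using k1 by (simp add: v0_def u_def)
      ultimately show "v0 i \<in> (if i \<le> k then {-1..1} else {0})" by (auto simp: abs_le_iff)
    qed
    moreover have "(\<Sum>i\<le>k. (v0 i)^2) = 1"
    proof -
      have "(\<Sum>i\<le>k. (v0 i)^2) = (\<Sum>i\<in>{0,1}. (v0 i)^2)"
      proof (rule sum.mono_neutral_right)
        show "\<forall>i\<in>{..k} - {0, 1}. (v0 i)^2 = 0" by (auto simp: v0_def u_def)
      qed (use k1 in auto)
      also have "\<dots> = (inverse c)^2 * (g^2 + 1)" by (simp add: v0_def u_def power_mult_distrib algebra_simps)
      also have "(inverse c)^2 = inverse (c^2)" by (simp add: power_inverse)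
      also have "c^2 = 1 + g^2" unfolding c_def by simp
      also have "g^2 + 1 = 1 + g^2" by (rule add.commute)
      also have "inverse (1 + g^2) * (1 + g^2) = 1"
        using add_pos_nonneg[of "1::real" "g^2"] by (intro left_inverse) simp
      finally show ?thesis .
    qed
    ultimately show ?thesis by (simp add: K_def)
  qed
  moreover have "Q s v0 \<le> 0"
  proof -
    have "qf k (\<lambda>i j. m_hat n x (i+j) s) u = 0"
      using qf_at_sd[OF n0 k1, of x] unfolding u_def g_def s_def .
    then show ?thesis unfolding Q_def v0_def qf_scale by simp
  qed
  moreover have "s \<ge> 0" unfolding s_def sample_sd_def
    by (intro real_sqrt_ge_zero mult_nonneg_nonneg sum_nonneg) auto
  ultimately have "(s, v0) \<in> C" unfolding C_def by simp
  then have sT: "s \<in> T" unfolding T_def by (rule image_eqI[rotated]) simp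
  have bdd: "bdd_below T" by (rule bounded_imp_bdd_below[OF compact_imp_bounded[OF Tc]])
  define t where "t = Inf T"
  have tT: "t \<in> T" unfolding t_def by (rule closed_contains_Inf[OF _ bdd compact_imp_closed[OF Tc]]) (use sT in auto)
  then obtain v where v: "v \<in> K" "Q t v \<le> 0" "0 \<le> t" "t \<le> s" by (auto simp: T_def C_def)
  have t0: "t > 0"
  proof (rule ccontr)
    assume "\<not> t > 0"
    then have "t = 0" using v by simp
    then show False using Q0[OF v(1)] v(2) by simp
  qed
  have below: "Q \<sigma> w > 0" if "0 \<le> \<sigma>" "\<sigma> < t" "w \<in> K" for \<sigma> w
  proof (rule ccontr)
    assume "\<not> Q \<sigma> w > 0"
    then have "(\<sigma>, w) \<in> C" unfolding C_def using that v(4) by simp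
    then have "\<sigma> \<in> T" unfolding T_def by (rule image_eqI[rotated]) simp
    then have "t \<le> \<sigma>" unfolding t_def by (rule cInf_lower[OF _ bdd])
    with that show False by simp
  qed
  have psdK: "Q t w \<ge> 0" if "w \<in> K" for w
  proof -
    have "isCont (\<lambda>\<sigma>. Q \<sigma> w) t" unfolding Q_def qf_def m_hat_def by (intro continuous_intros)
    then have lim: "((\<lambda>\<sigma>. Q \<sigma> w) \<longlongrightarrow> Q t w) (at_left t)"
      by (simp add: isCont_def filterlim_at_split)
    have ev: "eventually (\<lambda>\<sigma>. 0 \<le> Q \<sigma> w) (at_left t)"
      using eventually_at_left_real[OF t0] by (rule eventually_mono) (auto intro: less_imp_le below that)
    show ?thesis by (rule tendsto_lowerbound[OF lim ev]) simp
  qed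
  have psd: "qf k (\<lambda>i j. m_hat n x (i+j) t) w \<ge> 0" for w
    by (rule psd_extend) (use psdK in \<open>auto simp: Q_def K_def\<close>)
  have Qz: "qf k (\<lambda>i j. m_hat n x (i+j) t) v = 0" using psd[of v] v(2) by (simp add: Q_def)
  have ker: "(\<Sum>j\<le>k. m_hat n x (i+j) t * v j) = 0" if "i \<le> k" for i
    by (rule psd_kernel[OF _ psd Qz that]) (simp add: add.commute)
  obtain j0 where j0: "j0 \<le> k" "v j0 \<noteq> 0" using K_nz[where k=k and v=v] v(1) by (auto simp: K_def)
  have "d_hat n x k t = 0" unfolding d_hat_def by (rule det_sq_kernel[OF ker j0]) 
  then show ?thesis using t0 v(4) s_def by auto
qed




lemma density_singleton_zero: "emeasure (density lborel f) {a} = 0"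
proof -
  have "(\<integral>\<^sup>+ x. f x * indicator {a} x \<partial>lborel) = (\<integral>\<^sup>+ x. f a * indicator {a} x \<partial>lborel)"
    by (intro nn_integral_cong) (simp split: split_indicator)
  also have "\<dots> = 0" by (simp add: nn_integral_cmult_indicator)
  finally show ?thesis unfolding density_def emeasure_measure_of_conv by simp
qed

lemma pair_eq_null:
  fixes X :: "'i \<Rightarrow> 'a \<Rightarrow> real"
  assumes P: "prob_space M" and ind: "prob_space.indep_vars M (\<lambda>_. borel) X I"
    and i: "i \<in> I" and j: "j \<in> I" and ij: "i \<noteq> j"
    and D: "distr M borel (X j) = density lborel f"
  shows "emeasure M {\<omega> \<in> space M. X i \<omega> = X j \<omega>} = 0"
proof -
  interpret prob_space M by (rule P)
  have iv: "indep_var (Pi\<^sub>M {i} (\<lambda>_. borel)) (\<lambda>\<omega>. restrict (\<lambda>l. X l \<omega>) {i})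
       (Pi\<^sub>M {j} (\<lambda>_. borel)) (\<lambda>\<omega>. restrict (\<lambda>l. X l \<omega>) {j})"
    by (rule indep_var_restrict[OF ind]) (use i j ij in auto)
  have "indep_var borel ((\<lambda>f. f i) \<circ> (\<lambda>\<omega>. restrict (\<lambda>l. X l \<omega>) {i}))
                   borel ((\<lambda>f. f j) \<circ> (\<lambda>\<omega>. restrict (\<lambda>l. X l \<omega>) {j}))"
    by (rule indep_var_compose[OF iv]) (auto intro: measurable_component_singleton)
  also have "((\<lambda>f. f i) \<circ> (\<lambda>\<omega>. restrict (\<lambda>l. X l \<omega>) {i})) = X i" by (simp add: fun_eq_iff)
  also have "((\<lambda>f. f j) \<circ> (\<lambda>\<omega>. restrict (\<lambda>l. X l \<omega>) {j})) = X j" by (simp add: fun_eq_iff)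
  finally have iv2: "indep_var borel (X i) borel (X j)" .
  then have rv: "random_variable borel (X i)" "random_variable borel (X j)"
    and joint: "distr M borel (X i) \<Otimes>\<^sub>M distr M borel (X j) = distr M (borel \<Otimes>\<^sub>M borel) (\<lambda>x. (X i x, X j x))"
    using indep_var_distribution_eq by auto
  interpret Dj: prob_space "distr M borel (X j)" by (rule prob_space_distr[OF rv(2)])
  let ?diag = "{p::real \<times> real. fst p = snd p}"
  have cl: "closed ?diag" by (intro closed_Collect_eq continuous_intros)
  have diag_sets: "?diag \<in> sets (borel \<Otimes>\<^sub>M borel)"
    unfolding borel_prod using borel_closed[OF cl] .
  have "{\<omega> \<in> space M. X i \<omega> = X j \<omega>} = (\<lambda>\<omega>. (X i \<omega>, X j \<omega>)) -` ?diag \<inter> space M" by auto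
  then have "emeasure M {\<omega> \<in> space M. X i \<omega> = X j \<omega>} = emeasure (distr M (borel \<Otimes>\<^sub>M borel) (\<lambda>x. (X i x, X j x))) ?diag"
    using emeasure_distr[OF measurable_Pair[OF rv] diag_sets] by simp
  also have "\<dots> = emeasure (distr M borel (X i) \<Otimes>\<^sub>M distr M borel (X j)) ?diag" by (simp add: joint)
  also have "\<dots> = (\<integral>\<^sup>+x. emeasure (distr M borel (X j)) (Pair x -` ?diag) \<partial>distr M borel (X i))"
    by (rule Dj.emeasure_pair_measure_alt) (simp add: diag_sets)
  also have "\<dots> = (\<integral>\<^sup>+x. 0 \<partial>distr M borel (X i))"
  proof (intro nn_integral_cong)
    fix x
    have "Pair x -` ?diag = {x}" by auto
    then show "emeasure (distr M borel (X j)) (Pair x -` ?diag) = 0"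
      using density_singleton_zero D by simp
  qed
  finally show ?thesis by simp
qed


theorem lemma6:
  fixes M :: "'a measure" and X :: "nat \<Rightarrow> 'a \<Rightarrow> real"
    and \<nu> :: "real measure" and \<sigma> :: real and n k :: nat
  assumes "prob_space M"
    and "prob_space \<nu>" and "sets \<nu> = sets borel"
    and "\<sigma> \<ge> 0"
    and "k \<ge> 1"
    and "n > k"
    and "\<And>i. i < n \<Longrightarrow> X i \<in> borel_measurable M"
    and "prob_space.indep_vars M (\<lambda>_. borel) X {..<n}"
    and "\<And>i. i < n \<Longrightarrow> distr M borel (X i) = gauss_mixture \<nu> \<sigma>"
    and "\<exists>f. gauss_mixture \<nu> \<sigma> = density lborel f"
  shows "AE \<omega> in M. \<exists>t. 0 < t \<and> t \<le> sample_sd n (\<lambda>i. X i \<omega>)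
                         \<and> d_hat n (\<lambda>i. X i \<omega>) k t = 0"
proof -
  interpret prob_space M by (rule assms(1))
  obtain f where f: "gauss_mixture \<nu> \<sigma> = density lborel f" using assms(10) by blast
  have null: "AE \<omega> in M. (i \<noteq> j \<longrightarrow> X i \<omega> \<noteq> X j \<omega>)" if i: "i < n" and j: "j < n" for i j
  proof (cases "i = j")
    case True
    then show ?thesis by simp
  next
    case False
    have [measurable]: "X i \<in> borel_measurable M" "X j \<in> borel_measurable M" using assms(7) i j by auto
    have N: "{\<omega> \<in> space M. X i \<omega> = X j \<omega>} \<in> sets M" by measurable
    have "emeasure M {\<omega> \<in> space M. X i \<omega> = X j \<omega>} = 0"
      by (rule pair_eq_null[OF assms(1) assms(8)]) (use i j False assms(9)[OF j] f in auto)
    then have "AE \<omega> in M. X i \<omega> \<noteq> X j \<omega>"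
      by (subst AE_iff_measurable[OF N]) auto
    then show ?thesis by simp
  qed
  have "AE \<omega> in M. \<forall>p\<in>{..<n} \<times> {..<n}. (fst p \<noteq> snd p \<longrightarrow> X (fst p) \<omega> \<noteq> X (snd p) \<omega>)"
    by (rule eventually_ball_finite) (use null in auto)
  then show ?thesis
  proof (rule eventually_mono)
    fix \<omega>
    assume h: "\<forall>p\<in>{..<n} \<times> {..<n}. (fst p \<noteq> snd p \<longrightarrow> X (fst p) \<omega> \<noteq> X (snd p) \<omega>)"
    have "inj_on (\<lambda>i. X i \<omega>) {..<n}"
    proof (rule inj_onI)
      fix a b assume "a \<in> {..<n}" "b \<in> {..<n}" "X a \<omega> = X b \<omega>"
      then show "a = b" using h[rule_format, of "(a, b)"] by auto
    qed
    then show "\<exists>t. 0 < t \<and> t \<le> sample_sd n (\<lambda>i. X i \<omega>) \<and> d_hat n (\<lambda>i. X i \<omega>) k t = 0"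
      by (rule det_root[OF _ assms(5) assms(6)])
  qed
qed

end
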